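(* Let $\alpha_1,\dots,\alpha_4$ be constants, $H=H(t,t^-,q,q^-,p,p^-)$ smooth, and $X=\xi\partial_t+\eta\partial_q+\nu\partial_p$ (coefficients functions of $(t,q,p)$) such that $\Omega=0$, so that $D(C)=(S_+-1)P$ holds on the solutions of the local extremal equation $F_H=\xi\frac{\delta\tilde H}{\delta t}+\eta\frac{\delta\tilde H}{\delta q}+\nu\frac{\delta\tilde H}{\delta p}=0$. If in addition the condition $(S_+-1)P=0$ is imposed, then $I=C$ is a differential first integral: $D(C)=0$ on the solutions of $F_H=0$ satisfying $(S_+-1)P=0$.
   Context: Constant delay $\tau>0$; $t^\pm=t\pm\tau$, $f^\pm=f(t\pm\tau)$; scalar $q,p$. $S_\pm$ are the forward/backward shift operators on expressions; $\xi^\pm=S_\pm(\xi)$ etc.; $H^+=S_+(H)$. $D$ is the total derivative acting on variables at $t^-,t,t^+$. $\tilde H=p^{-}(\alpha_{1}\dot{q}+\alpha_{2}\dot{q}^{-})+p(\alpha_{3}\dot{q}+\alpha_{4}\dot{q}^{-})-H$; $\frac{\delta\tilde H}{\delta p}=\alpha_1\dot q^++(\alpha_2+\alpha_3)\dot q+\alpha_4\dot q^--\partial_p(H+H^+)$, $\frac{\delta\tilde H}{\delta q}=-\big(\alpha_4\dot p^++(\alpha_2+\alpha_3)\dot p+\alpha_1\dot p^-+\partial_q(H+H^+)\big)$, $\frac{\delta\tilde H}{\delta t}=D[\alpha_2(p\dot q-p^-\dot q^-)+\alpha_4(p^+\dot q-p\dot q^-)]+D(H)-\partial_t(H+H^+)$.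 $\Omega=\nu^{-}(\alpha_{1}\dot{q}+\alpha_{2}\dot{q}^{-})+p^{-}(\alpha_{1}D(\eta)+\alpha_{2}D(\eta^{-}))+\nu(\alpha_{3}\dot{q}+\alpha_{4}\dot{q}^{-})+p(\alpha_{3}D(\eta)+\alpha_{4}D(\eta^{-}))+(\alpha_{2}p^{-}+\alpha_{4}p)\dot{q}^{-}D(\xi-\xi^{-})-\xi H_t-\eta H_q-\nu H_p-\xi^{-}H_{t^-}-\eta^{-}H_{q^-}-\nu^{-}H_{p^-}-HD(\xi)$. $C=\eta(\alpha_{4}p^{+}+(\alpha_{2}+\alpha_{3})p+\alpha_{1}p^{-})-\xi\big(\alpha_{2}(p\dot{q}-p^{-}\dot{q}^{-})+\alpha_{4}(p^{+}\dot{q}-p\dot{q}^{-})+H\big)$, $P=(\alpha_{2}p^{-}+\alpha_{4}p)D(\eta^{-})+\nu^{-}(\alpha_{1}\dot{q}+\alpha_{2}\dot{q}^{-})-(\alpha_{2}p^{-}+\alpha_{4}p)\dot{q}^{-}D(\xi^{-})-\xi^{-}H_{t^-}-\eta^{-}H_{q^-}-\nu^{-}H_{p^-}$. Equations are considered with $t^+-t=t-t^-=\tau$. *)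

theory Defs
  imports "HOL-Analysis.Analysis"
begin

text \<open>Points: (t,q,p) for the coefficients of X; (t,t^-,q,q^-,p,p^-) for H.
  Partial derivatives are components of the Frechet derivative.\<close>

type_synonym pt3 = "real \<times> real \<times> real"
type_synonym pt6 = "real \<times> real \<times> real \<times> real \<times> real \<times> real"

definition pd_t :: "(pt3 \<Rightarrow> real) \<Rightarrow> pt3 \<Rightarrow> real" where
  "pd_t f x = frechet_derivative f (at x) (1, 0, 0)"
definition pd_q :: "(pt3 \<Rightarrow> real) \<Rightarrow> pt3 \<Rightarrow> real" where
  "pd_q f x = frechet_derivative f (at x) (0, 1, 0)"
definition pd_p :: "(pt3 \<Rightarrow> real) \<Rightarrow> pt3 \<Rightarrow> real" where
  "pd_p f x = frechet_derivative f (at x) (0, 0, 1)"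

definition Dtot :: "(pt3 \<Rightarrow> real) \<Rightarrow> pt3 \<Rightarrow> real \<Rightarrow> real \<Rightarrow> real" where
  "Dtot f x qd pd = pd_t f x + pd_q f x * qd + pd_p f x * pd"

definition H_t :: "(pt6 \<Rightarrow> real) \<Rightarrow> pt6 \<Rightarrow> real" where
  "H_t H y = frechet_derivative H (at y) (1, 0, 0, 0, 0, 0)"
definition H_tm :: "(pt6 \<Rightarrow> real) \<Rightarrow> pt6 \<Rightarrow> real" where
  "H_tm H y = frechet_derivative H (at y) (0, 1, 0, 0, 0, 0)"
definition H_q :: "(pt6 \<Rightarrow> real) \<Rightarrow> pt6 \<Rightarrow> real" where
  "H_q H y = frechet_derivative H (at y) (0, 0, 1, 0, 0, 0)"
definition H_qm :: "(pt6 \<Rightarrow> real) \<Rightarrow> pt6 \<Rightarrow> real" where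
  "H_qm H y = frechet_derivative H (at y) (0, 0, 0, 1, 0, 0)"
definition H_p :: "(pt6 \<Rightarrow> real) \<Rightarrow> pt6 \<Rightarrow> real" where
  "H_p H y = frechet_derivative H (at y) (0, 0, 0, 0, 1, 0)"
definition H_pm :: "(pt6 \<Rightarrow> real) \<Rightarrow> pt6 \<Rightarrow> real" where
  "H_pm H y = frechet_derivative H (at y) (0, 0, 0, 0, 0, 1)"

text \<open>The expression Omega, as a function of the jet variables
  t, q, q^-, p, p^-, qdot, qdot^-, pdot, pdot^- (with t^- = t - tau).\<close>
definition Omega ::
  "real \<Rightarrow> real \<Rightarrow> real \<Rightarrow> real \<Rightarrow> real \<Rightarrow> (pt6 \<Rightarrow> real) \<Rightarrow>
   (pt3 \<Rightarrow> real) \<Rightarrow> (pt3 \<Rightarrow> real) \<Rightarrow> (pt3 \<Rightarrow> real) \<Rightarrow>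
   real \<Rightarrow> real \<Rightarrow> real \<Rightarrow> real \<Rightarrow> real \<Rightarrow> real \<Rightarrow> real \<Rightarrow> real \<Rightarrow> real \<Rightarrow> real" where
  "Omega a1 a2 a3 a4 \<tau> H xi eta nu t q qm p pm qd qdm pd pdm =
    (let X = (t, q, p); Xm = (t - \<tau>, qm, pm); Y = (t, t - \<tau>, q, qm, p, pm)
     in nu Xm * (a1 * qd + a2 * qdm)
        + pm * (a1 * Dtot eta X qd pd + a2 * Dtot eta Xm qdm pdm)
        + nu X * (a3 * qd + a4 * qdm)
        + p * (a3 * Dtot eta X qd pd + a4 * Dtot eta Xm qdm pdm)
        + (a2 * pm + a4 * p) * qdm * (Dtot xi X qd pd - Dtot xi Xm qdm pdm)
        - xi X * H_t H Y - eta X * H_q H Y - nu X * H_p H Y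
        - xi Xm * H_tm H Y - eta Xm * H_qm H Y - nu Xm * H_pm H Y
        - H Y * Dtot xi X qd pd)"

text \<open>Quantities along a trajectory (q(t), p(t)); D is the derivative along it.\<close>
definition Ytr :: "real \<Rightarrow> (real \<Rightarrow> real) \<Rightarrow> (real \<Rightarrow> real) \<Rightarrow> real \<Rightarrow> pt6" where
  "Ytr \<tau> q p t = (t, t - \<tau>, q t, q (t - \<tau>), p t, p (t - \<tau>))"

definition Xtr :: "(real \<Rightarrow> real) \<Rightarrow> (real \<Rightarrow> real) \<Rightarrow> real \<Rightarrow> pt3" where
  "Xtr q p t = (t, q t, p t)"

definition varH_p where
  "varH_p a1 a2 a3 a4 \<tau> H q p t =
     a1 * deriv q (t + \<tau>) + (a2 + a3) * deriv q t + a4 * deriv q (t - \<tau>)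
     - (H_p H (Ytr \<tau> q p t) + H_pm H (Ytr \<tau> q p (t + \<tau>)))"

definition varH_q where
  "varH_q a1 a2 a3 a4 \<tau> H q p t =
     - (a4 * deriv p (t + \<tau>) + (a2 + a3) * deriv p t + a1 * deriv p (t - \<tau>)
        + H_q H (Ytr \<tau> q p t) + H_qm H (Ytr \<tau> q p (t + \<tau>)))"

definition varH_t where
  "varH_t a1 a2 a3 a4 \<tau> H q p t =
     deriv (\<lambda>s. a2 * (p s * deriv q s - p (s - \<tau>) * deriv q (s - \<tau>))
              + a4 * (p (s + \<tau>) * deriv q s - p s * deriv q (s - \<tau>))) t
     + deriv (\<lambda>s. H (Ytr \<tau> q p s)) t
     - (H_t H (Ytr \<tau> q p t) + H_tm H (Ytr \<tau> q p (t + \<tau>)))"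

definition F_H where
  "F_H a1 a2 a3 a4 \<tau> H xi eta nu q p t =
     xi (Xtr q p t) * varH_t a1 a2 a3 a4 \<tau> H q p t
     + eta (Xtr q p t) * varH_q a1 a2 a3 a4 \<tau> H q p t
     + nu (Xtr q p t) * varH_p a1 a2 a3 a4 \<tau> H q p t"

definition Cq where
  "Cq a1 a2 a3 a4 \<tau> H xi eta q p t =
     eta (Xtr q p t) * (a4 * p (t + \<tau>) + (a2 + a3) * p t + a1 * p (t - \<tau>))
     - xi (Xtr q p t) * (a2 * (p t * deriv q t - p (t - \<tau>) * deriv q (t - \<tau>))
                        + a4 * (p (t + \<tau>) * deriv q t - p t * deriv q (t - \<tau>))
                        + H (Ytr \<tau> q p t))"

definition Pq where
  "Pq a1 a2 a3 a4 \<tau> H xi eta nu q p t =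
     (a2 * p (t - \<tau>) + a4 * p t) * deriv (\<lambda>s. eta (Xtr q p s)) (t - \<tau>)
     + nu (Xtr q p (t - \<tau>)) * (a1 * deriv q t + a2 * deriv q (t - \<tau>))
     - (a2 * p (t - \<tau>) + a4 * p t) * deriv q (t - \<tau>) * deriv (\<lambda>s. xi (Xtr q p s)) (t - \<tau>)
     - xi (Xtr q p (t - \<tau>)) * H_tm H (Ytr \<tau> q p t)
     - eta (Xtr q p (t - \<tau>)) * H_qm H (Ytr \<tau> q p t)
     - nu (Xtr q p (t - \<tau>)) * H_pm H (Ytr \<tau> q p t)"

end

theory Submission
  imports Defs
begin

lemma lin3: fixes L :: "real\<times>real\<times>real \<Rightarrow> real" assumes "linear L"
  shows "L (a,b,c) = a * L (1,0,0) + b * L (0,1,0) + c * L(0,0,1)"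
proof -
  have "(a,b,c) = a *\<^sub>R (1,0,0) + b *\<^sub>R (0,1,0) + c *\<^sub>R (0::real,0::real,1::real)" by simp
  then show ?thesis using assms by (simp only: linear_add[OF assms] linear_cmul[OF assms] real_scaleR_def)
qed
lemma lin6: fixes L :: "real\<times>real\<times>real\<times>real\<times>real\<times>real \<Rightarrow> real" assumes "linear L"
  shows "L (a,b,c,d,e,f) = a * L (1,0,0,0,0,0) + b * L (0,1,0,0,0,0) + c * L(0,0,1,0,0,0)
     + d * L (0,0,0,1,0,0) + e * L (0,0,0,0,1,0) + f * L(0,0,0,0,0,1)"
proof -
  have "(a,b,c,d,e,f) = a *\<^sub>R (1,0,0,0,0,0) + b *\<^sub>R (0,1,0,0,0,0) + c *\<^sub>R (0,0,1,0,0,0)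
     + d *\<^sub>R (0,0,0,1,0,0) + e *\<^sub>R (0,0,0,0,1,0) + f *\<^sub>R (0::real,0::real,0::real,0::real,0::real,1::real)" by simp
  then show ?thesis using assms by (simp only: linear_add[OF assms] linear_cmul[OF assms] real_scaleR_def)
qed
lemma chain3:
  fixes f :: "real\<times>real\<times>real \<Rightarrow> real"
  assumes f: "f differentiable (at (s, q s, p s))"
    and dq: "(q has_real_derivative dq) (at s)" and dp: "(p has_real_derivative dp) (at s)"
  shows "((\<lambda>s. f (s, q s, p s)) has_real_derivative
     (frechet_derivative f (at (s, q s, p s)) (1,0,0) + frechet_derivative f (at (s, q s, p s)) (0,1,0) * dq
      + frechet_derivative f (at (s, q s, p s)) (0,0,1) * dp)) (at s)"
proof -
  let ?L = "frechet_derivative f (at (s, q s, p s))"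
  have X: "((\<lambda>s. (s, q s, p s)) has_derivative (\<lambda>h. (h, dq * h, dp * h))) (at s)"
    using dq dp by (auto intro!: derivative_eq_intros has_field_derivative_imp_has_derivative)
  have F: "(f has_derivative ?L) (at (s, q s, p s))" using f frechet_derivative_works by blast
  have lin: "linear ?L" using F has_derivative_linear by blast
  have C: "((\<lambda>s. f (s, q s, p s)) has_derivative (\<lambda>h. ?L (h, dq * h, dp * h))) (at s)"
    using diff_chain_at[OF X F] by (simp add: o_def)
  show ?thesis unfolding has_field_derivative_def
    by (rule has_derivative_eq_rhs[OF C]) (rule ext, subst lin3[OF lin], simp add: algebra_simps)
qed
lemma chain6:
  fixes f :: "real\<times>real\<times>real\<times>real\<times>real\<times>real \<Rightarrow> real"
  assumes f: "f differentiable (at (s, s - \<tau>, q s, q (s - \<tau>), p s, p (s - \<tau>)))"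
    and dq: "(q has_real_derivative dq) (at s)" and dp: "(p has_real_derivative dp) (at s)"
    and dqm: "(q has_real_derivative dqm) (at (s - \<tau>))" and dpm: "(p has_real_derivative dpm) (at (s - \<tau>))"
  shows "((\<lambda>s. f (s, s - \<tau>, q s, q (s - \<tau>), p s, p (s - \<tau>))) has_real_derivative
     (let L = frechet_derivative f (at (s, s - \<tau>, q s, q (s - \<tau>), p s, p (s - \<tau>))) in
      L (1,0,0,0,0,0) + L (0,1,0,0,0,0) + L (0,0,1,0,0,0) * dq + L (0,0,0,1,0,0) * dqm
      + L (0,0,0,0,1,0) * dp + L (0,0,0,0,0,1) * dpm)) (at s)"
proof -
  let ?L = "frechet_derivative f (at (s, s - \<tau>, q s, q (s - \<tau>), p s, p (s - \<tau>)))"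
  have sh: "((\<lambda>s. s - \<tau>) has_real_derivative 1) (at s)" by (auto intro!: derivative_eq_intros)
  have sh': "((\<lambda>s. s - \<tau>) has_derivative (\<lambda>h. h)) (at s)" by (auto intro!: derivative_eq_intros)
  have dqm': "((\<lambda>s. q (s - \<tau>)) has_real_derivative dqm) (at s)"
    using DERIV_chain2[OF dqm sh] by simp
  have dpm': "((\<lambda>s. p (s - \<tau>)) has_real_derivative dpm) (at s)"
    using DERIV_chain2[OF dpm sh] by simp
  have X: "((\<lambda>s. (s, s - \<tau>, q s, q (s - \<tau>), p s, p (s - \<tau>))) has_derivative
      (\<lambda>h. (h, h, dq * h, dqm * h, dp * h, dpm * h))) (at s)"
    by (intro has_derivative_Pair has_derivative_ident sh' has_field_derivative_imp_has_derivative[unfolded mult_commute_abs] dq dp dqm' dpm')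
  have F: "(f has_derivative ?L) (at (s, s - \<tau>, q s, q (s - \<tau>), p s, p (s - \<tau>)))" using f frechet_derivative_works by blast
  have lin: "linear ?L" using F has_derivative_linear by blast
  have C: "((\<lambda>s. f (s, s - \<tau>, q s, q (s - \<tau>), p s, p (s - \<tau>))) has_derivative (\<lambda>h. ?L (h, h, dq * h, dqm * h, dp * h, dpm * h))) (at s)"
    using diff_chain_at[OF X F] by (simp add: o_def)
  show ?thesis unfolding has_field_derivative_def Let_def
    by (rule has_derivative_eq_rhs[OF C]) (rule ext, subst lin6[OF lin], simp add: algebra_simps)
qed

theorem proposition3:
  fixes a1 a2 a3 a4 \<tau> :: real
    and H :: "pt6 \<Rightarrow> real"
    and xi eta nu :: "pt3 \<Rightarrow> real"
    and q p :: "real \<Rightarrow> real"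
  assumes tau_pos: "\<tau> > 0"
    and H_smooth: "\<forall>y. H differentiable (at y)"
    and xi_smooth: "\<forall>x. xi differentiable (at x)"
    and eta_smooth: "\<forall>x. eta differentiable (at x)"
    and nu_smooth: "\<forall>x. nu differentiable (at x)"
    and q_smooth: "\<forall>n s. ((deriv ^^ n) q) differentiable (at s)"
    and p_smooth: "\<forall>n s. ((deriv ^^ n) p) differentiable (at s)"
    and Omega_zero: "\<forall>t q0 qm p0 pm qd qdm pd pdm.
                       Omega a1 a2 a3 a4 \<tau> H xi eta nu t q0 qm p0 pm qd qdm pd pdm = 0"
    and solution: "\<forall>t. F_H a1 a2 a3 a4 \<tau> H xi eta nu q p t = 0"
    and P_cond: "\<forall>t. Pq a1 a2 a3 a4 \<tau> H xi eta nu q p (t + \<tau>)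
                      - Pq a1 a2 a3 a4 \<tau> H xi eta nu q p t = 0"
  shows "\<forall>t. deriv (Cq a1 a2 a3 a4 \<tau> H xi eta q p) t = 0"
proof
  fix t
  have Dgen: "\<And>f s. (\<forall>s. f differentiable (at s)) \<Longrightarrow> (f has_real_derivative deriv f s) (at s)"
    using DERIV_deriv_iff_real_differentiable by blast
  have q0: "\<forall>s. q differentiable (at s)" using q_smooth[rule_format, of 0] by simp
  have q1: "\<forall>s. deriv q differentiable (at s)" using q_smooth[rule_format, of 1] by simp
  have p0: "\<forall>s. p differentiable (at s)" using p_smooth[rule_format, of 0] by simp
  have Dq: "\<And>s. (q has_real_derivative deriv q s) (at s)" using Dgen[OF q0] .
  have Dq1: "\<And>s. (deriv q has_real_derivative deriv (deriv q) s) (at s)" using Dgen[OF q1] .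
  have Dp: "\<And>s. (p has_real_derivative deriv p s) (at s)" using Dgen[OF p0] .
  have shP: "\<And>f D s. (f has_real_derivative D) (at (s + \<tau>)) \<Longrightarrow> ((\<lambda>s. f (s + \<tau>)) has_real_derivative D) (at s)"
    by (simp add: DERIV_shift)
  have shM: "\<And>f D s. (f has_real_derivative D) (at (s - \<tau>)) \<Longrightarrow> ((\<lambda>s. f (s - \<tau>)) has_real_derivative D) (at s)"
    using DERIV_shift[where z="-\<tau>"] by simp
  have DpP: "\<And>s. ((\<lambda>s. p (s + \<tau>)) has_real_derivative deriv p (s + \<tau>)) (at s)" using shP[OF Dp] .
  have DpM: "\<And>s. ((\<lambda>s. p (s - \<tau>)) has_real_derivative deriv p (s - \<tau>)) (at s)" using shM[OF Dp] .
  have DqM1: "\<And>s. ((\<lambda>s. deriv q (s - \<tau>)) has_real_derivative deriv (deriv q) (s - \<tau>)) (at s)" using shM[OF Dq1] .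
  have DE: "\<And>s. ((\<lambda>s. eta (Xtr q p s)) has_real_derivative Dtot eta (Xtr q p s) (deriv q s) (deriv p s)) (at s)"
    unfolding Xtr_def Dtot_def pd_t_def pd_q_def pd_p_def
    using chain3[OF eta_smooth[rule_format] Dq Dp] by simp
  have DX: "\<And>s. ((\<lambda>s. xi (Xtr q p s)) has_real_derivative Dtot xi (Xtr q p s) (deriv q s) (deriv p s)) (at s)"
    unfolding Xtr_def Dtot_def pd_t_def pd_q_def pd_p_def
    using chain3[OF xi_smooth[rule_format] Dq Dp] by simp
  have dE: "\<And>s. deriv (\<lambda>s. eta (Xtr q p s)) s = Dtot eta (Xtr q p s) (deriv q s) (deriv p s)"
    using DE DERIV_imp_deriv by blast
  have dX: "\<And>s. deriv (\<lambda>s. xi (Xtr q p s)) s = Dtot xi (Xtr q p s) (deriv q s) (deriv p s)"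
    using DX DERIV_imp_deriv by blast
  define hd where "hd = H_t H (Ytr \<tau> q p t) + H_tm H (Ytr \<tau> q p t) + H_q H (Ytr \<tau> q p t) * deriv q t
      + H_qm H (Ytr \<tau> q p t) * deriv q (t - \<tau>) + H_p H (Ytr \<tau> q p t) * deriv p t + H_pm H (Ytr \<tau> q p t) * deriv p (t - \<tau>)"
  have Dh: "((\<lambda>s. H (Ytr \<tau> q p s)) has_real_derivative hd) (at t)"
    unfolding hd_def Ytr_def H_t_def H_tm_def H_q_def H_qm_def H_p_def H_pm_def
    using chain6[OF H_smooth[rule_format] Dq Dp Dq Dp] by (simp add: Let_def)
  define G where "G = (\<lambda>s. a2 * (p s * deriv q s - p (s - \<tau>) * deriv q (s - \<tau>))
              + a4 * (p (s + \<tau>) * deriv q s - p s * deriv q (s - \<tau>)))"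
  have Gd: "G differentiable (at t)"
    unfolding real_differentiable_def G_def
    by (rule exI, (rule DERIV_cmult DERIV_add DERIV_diff DERIV_mult Dp Dq1 DpP DpM DqM1)+)
  have DG: "(G has_real_derivative deriv G t) (at t)"
    using Gd DERIV_deriv_iff_real_differentiable by blast
  define A where "A = (\<lambda>s. a4 * p (s + \<tau>) + (a2 + a3) * p s + a1 * p (s - \<tau>))"
  have DA: "(A has_real_derivative (a4 * deriv p (t + \<tau>) + (a2 + a3) * deriv p t + a1 * deriv p (t - \<tau>))) (at t)"
    unfolding A_def by (rule DERIV_add DERIV_cmult DpP Dp DpM)+
  have Ceq: "Cq a1 a2 a3 a4 \<tau> H xi eta q p = (\<lambda>s. eta (Xtr q p s) * A s - xi (Xtr q p s) * (G s + H (Ytr \<tau> q p s)))"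
    unfolding Cq_def[abs_def] A_def G_def by simp
  have DC: "deriv (Cq a1 a2 a3 a4 \<tau> H xi eta q p) t =
     Dtot eta (Xtr q p t) (deriv q t) (deriv p t) * A t + eta (Xtr q p t) * (a4 * deriv p (t + \<tau>) + (a2 + a3) * deriv p t + a1 * deriv p (t - \<tau>))
     - (Dtot xi (Xtr q p t) (deriv q t) (deriv p t) * (G t + H (Ytr \<tau> q p t)) + xi (Xtr q p t) * (deriv G t + hd))"
    unfolding Ceq
    using DERIV_imp_deriv[OF DERIV_diff[OF DERIV_mult[OF DE DA] DERIV_mult[OF DX DERIV_add[OF DG Dh]]]]
    by (simp add: algebra_simps)
  have dG: "deriv (\<lambda>s. a2 * (p s * deriv q s - p (s - \<tau>) * deriv q (s - \<tau>))
              + a4 * (p (s + \<tau>) * deriv q s - p s * deriv q (s - \<tau>))) t = deriv G t"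
    unfolding G_def ..
  have dh: "deriv (\<lambda>s. H (Ytr \<tau> q p s)) t = hd" using Dh DERIV_imp_deriv by blast
  have key: "deriv (Cq a1 a2 a3 a4 \<tau> H xi eta q p) t =
      Omega a1 a2 a3 a4 \<tau> H xi eta nu t (q t) (q (t - \<tau>)) (p t) (p (t - \<tau>)) (deriv q t) (deriv q (t - \<tau>)) (deriv p t) (deriv p (t - \<tau>))
      + (Pq a1 a2 a3 a4 \<tau> H xi eta nu q p (t + \<tau>) - Pq a1 a2 a3 a4 \<tau> H xi eta nu q p t)
      - F_H a1 a2 a3 a4 \<tau> H xi eta nu q p t"
    unfolding DC Omega_def Pq_def F_H_def varH_t_def varH_q_def varH_p_def dG dh dE dX
    by (simp add: Let_def A_def G_def hd_def Xtr_def Ytr_def algebra_simps)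
  show "deriv (Cq a1 a2 a3 a4 \<tau> H xi eta q p) t = 0"
    using key Omega_zero solution P_cond by simp
qed

end
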